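(* Let $m\ge 2$ and consider the system $$\frac{du_i}{dt}=-a_iu_i+\sum_{j=1}^m w_{ij}f_j(u_j)+k\,\varphi_i(\rho)\,u_i+J_i-P\sum_{j=1}^m(u_i-u_j),\quad 1\le i\le m,\qquad \frac{d\rho}{dt}=\sum_{i=1}^m\gamma_iu_i-b\rho,$$ with $P>0$; $a_i,b,\beta,\eta_i,k>0$; $w_{ij},J_i,\gamma_i\in\mathbb{R}$; $f_i,\varphi_i$ locally Lipschitz with $a_i>k$, $|f_i(s)|\le\beta$, $\varphi_i(s)=1-\eta_is^2$ for all $s\in\mathbb{R}$, $1\le i\le m$. Define $a=\min_ia_i$, $W=\max_{i,j}|w_{ij}|$, $J=\max_i|J_i|$, $\gamma^2=\max_i\gamma_i^2$, $$C_1=\frac{1}{a-k}\Big(\frac{m\gamma^2}{b}+b\Big),\ C_2=\Big(\frac{m\gamma^2}{b}+b\Big)\frac{m(mW\beta+J)^2}{(a-k)^2},\ \mu_0=b\min\Big\{\frac1{C_1},1\Big\},\ Q=1+\frac{C_2}{\mu_0\min\{C_1,1\}},$$ and $a^*=\max_{i,j}|a_i-a_j|$, $W^*=\max_{i,j,\ell}|w_{i\ell}-w_{j\ell}|$, $\eta^*=\max_{i,j}|\eta_i-\eta_j|$, $J^*=\max_{i,j}|J_i-J_j|$. For $\varepsilon>0$ let $$P^*(\varepsilon)=\frac{1}{m\varepsilon}\big(mW^*\beta+a^*Q^{1/2}+k\eta^*Q^{3/2}+J^*\big).$$ Then for every $\varepsilon>0$, if $P>P^*(\varepsilon)$, $$\sup_{g^0\in\mathbb{R}^{m+1}}\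 \max_{1\le i<j\le m}\ \limsup_{t\to\infty}|u_i(t)-u_j(t)|<\varepsilon,$$ with uniform exponential convergence rate $\mu=a-k+P$, in the sense that there is a constant $D<\varepsilon$ (independent of the initial state) such that for every initial state there is $T\ge0$ with $|u_i(t)-u_j(t)|^2\le e^{-\mu(t-T)}|u_i(T)-u_j(T)|^2+D^2$ for all $t>T$ and all $i\ne j$.
   Context: Here $(u_1,\dots,u_m,\rho)$ denotes the (global) solution with initial state $g^0=(u_1(0),\dots,u_m(0),\rho(0))\in\mathbb{R}^{m+1}$. This is the variant of the memristive Hopfield network in which the sigmoidal weak coupling $-Pu_i\sum_j\Gamma(u_j)$ is replaced by linear (strong) coupling $-P\sum_j(u_i-u_j)$. *)

theory Defs
  imports "HOL-Analysis.Analysis"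
begin

definition loc_lipschitz :: "(real \<Rightarrow> real) \<Rightarrow> bool" where
  "loc_lipschitz f \<longleftrightarrow> (\<forall>x. \<exists>e>0. \<exists>L. L-lipschitz_on (cball x e) f)"

definition amin :: "nat \<Rightarrow> (nat \<Rightarrow> real) \<Rightarrow> real" where
  "amin m a = Min (a ` {1..m})"

definition Wmax :: "nat \<Rightarrow> (nat \<Rightarrow> nat \<Rightarrow> real) \<Rightarrow> real" where
  "Wmax m w = Max {\<bar>w i j\<bar> | i j. i \<in> {1..m} \<and> j \<in> {1..m}}"

definition Jmax :: "nat \<Rightarrow> (nat \<Rightarrow> real) \<Rightarrow> real" where
  "Jmax m J = Max ((\<lambda>i. \<bar>J i\<bar>) ` {1..m})"

definition gamma2 :: "nat \<Rightarrow> (nat \<Rightarrow> real) \<Rightarrow> real" where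
  "gamma2 m \<gamma> = Max ((\<lambda>i. (\<gamma> i)^2) ` {1..m})"

definition C1 :: "nat \<Rightarrow> (nat \<Rightarrow> real) \<Rightarrow> real \<Rightarrow> (nat \<Rightarrow> real) \<Rightarrow> real \<Rightarrow> real" where
  "C1 m a k \<gamma> b = (1 / (amin m a - k)) * (real m * gamma2 m \<gamma> / b + b)"

definition C2 :: "nat \<Rightarrow> (nat \<Rightarrow> real) \<Rightarrow> (nat \<Rightarrow> nat \<Rightarrow> real) \<Rightarrow> real \<Rightarrow> (nat \<Rightarrow> real)
    \<Rightarrow> real \<Rightarrow> (nat \<Rightarrow> real) \<Rightarrow> real \<Rightarrow> real" where
  "C2 m a w \<beta> J k \<gamma> b = (real m * gamma2 m \<gamma> / b + b) *
      (real m * (real m * Wmax m w * \<beta> + Jmax m J)^2 / (amin m a - k)^2)"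

definition mu0 :: "nat \<Rightarrow> (nat \<Rightarrow> real) \<Rightarrow> real \<Rightarrow> (nat \<Rightarrow> real) \<Rightarrow> real \<Rightarrow> real" where
  "mu0 m a k \<gamma> b = b * min (1 / C1 m a k \<gamma> b) 1"

definition Qc :: "nat \<Rightarrow> (nat \<Rightarrow> real) \<Rightarrow> (nat \<Rightarrow> nat \<Rightarrow> real) \<Rightarrow> real \<Rightarrow> (nat \<Rightarrow> real)
    \<Rightarrow> real \<Rightarrow> (nat \<Rightarrow> real) \<Rightarrow> real \<Rightarrow> real" where
  "Qc m a w \<beta> J k \<gamma> b = 1 + C2 m a w \<beta> J k \<gamma> b / (mu0 m a k \<gamma> b * min (C1 m a k \<gamma> b) 1)"

definition astar :: "nat \<Rightarrow> (nat \<Rightarrow> real) \<Rightarrow> real" where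
  "astar m a = Max {\<bar>a i - a j\<bar> | i j. i \<in> {1..m} \<and> j \<in> {1..m}}"

definition Wstar :: "nat \<Rightarrow> (nat \<Rightarrow> nat \<Rightarrow> real) \<Rightarrow> real" where
  "Wstar m w = Max {\<bar>w i l - w j l\<bar> | i j l. i \<in> {1..m} \<and> j \<in> {1..m} \<and> l \<in> {1..m}}"

definition etastar :: "nat \<Rightarrow> (nat \<Rightarrow> real) \<Rightarrow> real" where
  "etastar m \<eta> = Max {\<bar>\<eta> i - \<eta> j\<bar> | i j. i \<in> {1..m} \<and> j \<in> {1..m}}"

definition Jstar :: "nat \<Rightarrow> (nat \<Rightarrow> real) \<Rightarrow> real" where
  "Jstar m J = Max {\<bar>J i - J j\<bar> | i j. i \<in> {1..m} \<and> j \<in> {1..m}}"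

definition Pstar :: "nat \<Rightarrow> (nat \<Rightarrow> real) \<Rightarrow> (nat \<Rightarrow> nat \<Rightarrow> real) \<Rightarrow> real \<Rightarrow> (nat \<Rightarrow> real)
    \<Rightarrow> real \<Rightarrow> (nat \<Rightarrow> real) \<Rightarrow> (nat \<Rightarrow> real) \<Rightarrow> real \<Rightarrow> real \<Rightarrow> real" where
  "Pstar m a w \<beta> J k \<eta> \<gamma> b \<epsilon> =
     (1 / (real m * \<epsilon>)) *
     (real m * Wstar m w * \<beta> + astar m a * sqrt (Qc m a w \<beta> J k \<gamma> b)
      + k * etastar m \<eta> * (Qc m a w \<beta> J k \<gamma> b) powr (3/2) + Jstar m J)"

definition is_solution :: "nat \<Rightarrow> (nat \<Rightarrow> real) \<Rightarrow> (nat \<Rightarrow> nat \<Rightarrow> real) \<Rightarrow> (nat \<Rightarrow> real \<Rightarrow> real)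
    \<Rightarrow> real \<Rightarrow> (nat \<Rightarrow> real) \<Rightarrow> (nat \<Rightarrow> real) \<Rightarrow> real \<Rightarrow> (nat \<Rightarrow> real) \<Rightarrow> real
    \<Rightarrow> (real \<Rightarrow> nat \<Rightarrow> real) \<Rightarrow> (real \<Rightarrow> real) \<Rightarrow> bool" where
  "is_solution m a w f k \<eta> J P \<gamma> b u \<rho> \<longleftrightarrow>
     (\<forall>t\<ge>0.
        (\<forall>i\<in>{1..m}. ((\<lambda>s. u s i) has_real_derivative
            (- a i * u t i + (\<Sum>j=1..m. w i j * f j (u t j))
             + k * (1 - \<eta> i * (\<rho> t)^2) * u t i + J i
             - P * (\<Sum>j=1..m. u t i - u t j))) (at t within {0..}))
      \<and> (\<rho> has_real_derivative ((\<Sum>i=1..m. \<gamma> i * u t i) - b * \<rho> t)) (at t within {0..}))"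

end

theory Submission
  imports Defs
begin

lemma deriv_at_pos:
  assumes "t > 0" "(f has_real_derivative d) (at t within {0..})"
  shows "(f has_real_derivative d) (at t)"
proof -
  have "(f has_real_derivative d) (at t within {0<..})"
    by (rule has_field_derivative_subset[OF assms(2)]) (simp add: subset_eq)
  moreover have "at t within {0<..} = at t"
    using assms(1) by (intro at_within_open) auto
  ultimately show ?thesis by simp
qed
lemma ode_ev:
  fixes y y' :: "real \<Rightarrow> real" and c K \<delta> :: real
  assumes der: "\<And>t. t \<ge> 0 \<Longrightarrow> (y has_real_derivative y' t) (at t within {0..})"
    and ineq: "eventually (\<lambda>t. y' t \<le> - c * y t + K) at_top"
    and c: "c > 0" and d: "\<delta> > 0"
  shows "eventually (\<lambda>t. y t \<le> K / c + \<delta>) at_top"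
proof -
  obtain t1 where t1: "\<And>t. t \<ge> t1 \<Longrightarrow> y' t \<le> - c * y t + K"
    using ineq unfolding eventually_at_top_linorder by blast
  define t0 where "t0 = max t1 1"
  define z where "z t = (y t - K / c) * exp (c * t)" for t
  have zder: "(z has_real_derivative (y' t * exp (c * t) + (y t - K / c) * (c * exp (c * t)))) (at t)"
    if "t \<ge> t0" for t
  proof -
    have "t > 0" using that by (simp add: t0_def)
    then have yd: "(y has_real_derivative y' t) (at t)"
      using der[of t] deriv_at_pos by auto
    show ?thesis unfolding z_def
      by (auto intro!: derivative_eq_intros yd)
  qed
  have zneg: "y' t * exp (c * t) + (y t - K / c) * (c * exp (c * t)) \<le> 0" if "t \<ge> t0" for t
  proof -
    have "y' t * exp (c * t) + (y t - K / c) * (c * exp (c * t)) = exp (c * t) * (y' t + c * y t - K)"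
      using c by (simp add: field_simps)
    also have "\<dots> \<le> 0"
      using t1[of t] that by (intro mult_nonneg_nonpos) (auto simp: t0_def)
    finally show ?thesis .
  qed
  have zmono: "z t \<le> z t0" if "t \<ge> t0" for t
  proof (rule DERIV_nonpos_imp_nonincreasing[of t0 t z])
    fix x assume "t0 \<le> x" "x \<le> t"
    then show "\<exists>y. DERIV z x :> y \<and> y \<le> 0" using zder[of x] zneg[of x] by blast
  qed (rule that)
  define C where "C = (y t0 - K / c) * exp (c * t0)"
  have bnd: "y t \<le> K / c + C * exp (- c * t)" if "t \<ge> t0" for t
  proof -
    have "(y t - K / c) * exp (c * t) \<le> C" using zmono[OF that] by (simp add: z_def C_def)
    then have "y t - K / c \<le> C * exp (- c * t)"
      by (simp add: exp_minus field_simps)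
    then show ?thesis by simp
  qed
  have "((\<lambda>t. C * exp (- c * t)) \<longlongrightarrow> 0) at_top"
  proof -
    have "filterlim (\<lambda>t. c * t) at_top at_top"
      by (rule filterlim_tendsto_pos_mult_at_top[OF tendsto_const c filterlim_ident])
    then have "filterlim (\<lambda>t. exp (c * t)) at_top at_top"
      by (rule filterlim_compose[OF exp_at_top])
    then have "((\<lambda>t. inverse (exp (c * t))) \<longlongrightarrow> 0) at_top"
      by (rule tendsto_inverse_0_at_top)
    then have "((\<lambda>t. C * inverse (exp (c * t))) \<longlongrightarrow> 0) at_top"
      by (rule tendsto_mult_right_zero)
    then show ?thesis by (simp add: exp_minus)
  qed
  then have "eventually (\<lambda>t. C * exp (- c * t) < \<delta>) at_top"
    using d by (rule order_tendstoD)
  then show ?thesis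
    using eventually_ge_at_top[of t0]
  proof eventually_elim
    case (elim t)
    then show ?case using bnd[of t] by linarith
  qed
qed

lemma coupling_nonneg:
  fixes x :: "nat \<Rightarrow> real"
  assumes "finite S"
  shows "(\<Sum>i\<in>S. x i * (\<Sum>j\<in>S. x i - x j)) \<ge> 0"
proof -
  define T where "T = (\<Sum>i\<in>S. \<Sum>j\<in>S. x i * (x i - x j))"
  have T1: "(\<Sum>i\<in>S. x i * (\<Sum>j\<in>S. x i - x j)) = T"
    unfolding T_def by (simp add: sum_distrib_left)
  have T2: "T = (\<Sum>i\<in>S. \<Sum>j\<in>S. x j * (x j - x i))" unfolding T_def by (rule sum.swap)
  have pt: "x i * (x i - x j) + x j * (x j - x i) = (x i - x j)^2" for i j
    by (simp add: power2_eq_square algebra_simps)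
  have "2 * T = T + T" by simp
  also have "\<dots> = (\<Sum>i\<in>S. \<Sum>j\<in>S. x i * (x i - x j) + x j * (x j - x i))"
    by (subst (2) T2) (simp add: T_def sum.distrib)
  also have "\<dots> = (\<Sum>i\<in>S. \<Sum>j\<in>S. (x i - x j)^2)"
    by (simp only: pt)
  also have "\<dots> \<ge> 0" by (intro sum_nonneg) auto
  finally show ?thesis using T1 by simp
qed


lemma fin2: "finite A \<Longrightarrow> finite {g i j | i j. i \<in> A \<and> j \<in> A}"
proof -
  assume "finite A"
  have "{g i j | i j. i \<in> A \<and> j \<in> A} = (\<lambda>(i,j). g i j) ` (A \<times> A)" by auto
  then show ?thesis using \<open>finite A\<close> by simp
qed

lemma fin3: "finite A \<Longrightarrow> finite {g i j l | i j l. i \<in> A \<and> j \<in> A \<and> l \<in> A}"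
proof -
  assume "finite A"
  have "{g i j l | i j l. i \<in> A \<and> j \<in> A \<and> l \<in> A} = (\<lambda>(i,j,l). g i j l) ` (A \<times> A \<times> A)" by force
  then show ?thesis using \<open>finite A\<close> by simp
qed

lemma astar_ge: "i \<in> {1..m} \<Longrightarrow> j \<in> {1..m} \<Longrightarrow> \<bar>a i - a j\<bar> \<le> astar m a"
  unfolding astar_def by (rule Max_ge[OF fin2[of "{1..m}" "\<lambda>i j. \<bar>a i - a j\<bar>"]]) blast+

lemma etastar_ge: "i \<in> {1..m} \<Longrightarrow> j \<in> {1..m} \<Longrightarrow> \<bar>a i - a j\<bar> \<le> etastar m a"
  unfolding etastar_def by (rule Max_ge[OF fin2[of "{1..m}" "\<lambda>i j. \<bar>a i - a j\<bar>"]]) blast+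

lemma Jstar_ge: "i \<in> {1..m} \<Longrightarrow> j \<in> {1..m} \<Longrightarrow> \<bar>a i - a j\<bar> \<le> Jstar m a"
  unfolding Jstar_def by (rule Max_ge[OF fin2[of "{1..m}" "\<lambda>i j. \<bar>a i - a j\<bar>"]]) blast+

lemma Wmax_ge: "i \<in> {1..m} \<Longrightarrow> j \<in> {1..m} \<Longrightarrow> \<bar>w i j\<bar> \<le> Wmax m w"
  unfolding Wmax_def by (rule Max_ge[OF fin2[of "{1..m}" "\<lambda>i j. \<bar>w i j\<bar>"]]) blast+

lemma Wstar_ge: "i \<in> {1..m} \<Longrightarrow> j \<in> {1..m} \<Longrightarrow> l \<in> {1..m} \<Longrightarrow> \<bar>w i l - w j l\<bar> \<le> Wstar m w"
  unfolding Wstar_def by (rule Max_ge[OF fin3[of "{1..m}" "\<lambda>i j l. \<bar>w i l - w j l\<bar>"]]) blast+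

lemma Jmax_ge: "i \<in> {1..m} \<Longrightarrow> \<bar>J i\<bar> \<le> Jmax m J"
  unfolding Jmax_def by (rule Max_ge) auto

lemma gamma2_ge: "i \<in> {1..m} \<Longrightarrow> (g i)^2 \<le> gamma2 m g"
  unfolding gamma2_def by (rule Max_ge) auto

lemma amin_le: "i \<in> {1..m} \<Longrightarrow> amin m a \<le> a i"
  unfolding amin_def by (rule Min_le) auto

lemma amin_in: "m \<ge> 1 \<Longrightarrow> \<exists>i\<in>{1..m}. amin m a = a i"
proof -
  assume "m \<ge> 1"
  then have "a ` {1..m} \<noteq> {}" by auto
  then have "Min (a ` {1..m}) \<in> a ` {1..m}" by (intro Min_in) auto
  then show ?thesis unfolding amin_def by auto
qed

lemma young:
  fixes A x s :: real
  assumes "A > 0"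
  shows "2 * x * s \<le> A * x^2 + s^2 / A"
proof -
  have "0 \<le> (A * x - s)^2" by simp
  then have "2 * x * s * A \<le> A * x^2 * A + s^2"
    by (simp add: power2_eq_square algebra_simps)
  then have "2 * x * s \<le> (A * x^2 * A + s^2) / A"
    using assms by (simp add: pos_le_divide_eq)
  also have "\<dots> = A * x^2 + s^2 / A" using assms by (simp add: field_simps)
  finally show ?thesis .
qed

lemma diff_ineq:
  fixes e r c \<alpha> G :: real
  assumes "c \<ge> \<alpha>" "\<alpha> > 0" "\<bar>r\<bar> \<le> G"
  shows "2 * e * (- c * e + r) \<le> - \<alpha> * e^2 + G^2 / \<alpha>"
proof -
  have "2 * e * (- c * e + r) = - 2 * c * e^2 + 2 * e * r" by (simp add: power2_eq_square algebra_simps)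
  also have "\<dots> \<le> - 2 * \<alpha> * e^2 + 2 * e * r"
    using assms(1) by (simp add: mult_right_mono)
  also have "2 * e * r \<le> \<alpha> * e^2 + r^2 / \<alpha>" by (rule young[OF assms(2)])
  also have "r^2 \<le> G^2" using assms(3) by (simp add: abs_le_square_iff[symmetric])
  finally show ?thesis using assms(2) by (simp add: divide_right_mono)
qed


lemma norm_pt:
  fixes A am k ai ei p x SW Ji P S M :: real
  assumes "A = am - k" "A > 0" "am \<le> ai" "\<bar>SW + Ji\<bar> \<le> M" "0 \<le> k * ei * p"
  shows "2 * x * (- ai * x + SW + k * (1 - ei * p) * x + Ji - P * S) \<le> - A * x^2 + M^2 / A - 2 * P * (x * S)"
proof -
  have eq: "2 * x * (- ai * x + SW + k * (1 - ei * p) * x + Ji - P * S)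
      = - 2 * ai * x^2 + 2 * x * (SW + Ji) + 2 * k * x^2 - 2 * (k * ei * p) * x^2 - 2 * P * (x * S)"
    by (simp add: algebra_simps power2_eq_square)
  have y: "2 * x * (SW + Ji) \<le> A * x^2 + (SW + Ji)^2 / A" by (rule young[OF assms(2)])
  have "(SW + Ji)^2 \<le> M^2" using assms(4) by (simp add: abs_le_square_iff[symmetric])
  then have y2: "(SW + Ji)^2 / A \<le> M^2 / A" using assms(2) by (simp add: divide_right_mono)
  have a1: "am * x^2 \<le> ai * x^2" using assms(3) by (simp add: mult_right_mono)
  have a2: "0 \<le> (k * ei * p) * x^2" using assms(5) by simp
  have a3: "A * x^2 = am * x^2 - k * x^2" unfolding assms(1) by (simp add: left_diff_distrib)
  show ?thesis unfolding eq using y y2 a1 a2 a3 by linarith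
qed

lemma diff_alg:
  fixes SWi SWj SD Si Sj U ui uj ai aj k ei ej p Ji Jj P :: real
  assumes "SWi - SWj = SD" "Si = m * ui - U" "Sj = m * uj - U"
  shows "(- ai * ui + SWi + k * (1 - ei * p) * ui + Ji - P * Si)
       - (- aj * uj + SWj + k * (1 - ej * p) * uj + Jj - P * Sj)
       = - (ai - k + k * ei * p + m * P) * (ui - uj)
         + (- (ai - aj) * uj + SD - k * (ei - ej) * p * uj + (Ji - Jj))"
proof -
  have "SWi = SWj + SD" using assms(1) by simp
  then show ?thesis unfolding assms(2,3) by (simp add: algebra_simps)
qed
lemma gamma2_nonneg: "m \<ge> 1 \<Longrightarrow> gamma2 m g \<ge> 0"
  unfolding gamma2_def by (rule order_trans[OF _ Max_ge[of _ "(g 1)^2"]]) auto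

lemma Q_ge:
  assumes A: "amin m a - k > 0" and b: "b > 0" and m: "m \<ge> 1"
  shows "Qc m a w \<beta> J k \<gamma> b \<ge> 1 + real m * (real m * Wmax m w * \<beta> + Jmax m J)^2 / (amin m a - k)^2
           + real m * gamma2 m \<gamma> * (real m * (real m * Wmax m w * \<beta> + Jmax m J)^2 / (amin m a - k)^2) / b^2"
proof -
  define R where "R = real m * (real m * Wmax m w * \<beta> + Jmax m J)^2 / (amin m a - k)^2"
  define g2 where "g2 = gamma2 m \<gamma>"
  define Bc where "Bc = real m * g2 / b + b"
  define c1 where "c1 = C1 m a k \<gamma> b"
  have g2: "g2 \<ge> 0" unfolding g2_def using m by (rule gamma2_nonneg)
  have R: "R \<ge> 0" unfolding R_def by simp
  have Bc: "Bc > 0" unfolding Bc_def using g2 b by (simp add: add_nonneg_pos)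
  have c1: "c1 = Bc / (amin m a - k)" unfolding c1_def C1_def Bc_def g2_def by simp
  have c1pos: "c1 > 0" unfolding c1 using Bc A by simp
  define p where "p = min (1 / c1) 1 * min c1 1"
  have p1: "p \<le> 1"
  proof (cases "c1 \<le> 1")
    case True then show ?thesis unfolding p_def using c1pos by (simp add: min_def)
  next
    case False then show ?thesis unfolding p_def using c1pos by (simp add: min_def field_simps)
  qed
  have p0: "p > 0" unfolding p_def using c1pos by simp
  have C2: "C2 m a w \<beta> J k \<gamma> b = Bc * R" unfolding C2_def Bc_def R_def g2_def by simp
  have Qeq: "Qc m a w \<beta> J k \<gamma> b = 1 + Bc * R / (b * p)"
    unfolding Qc_def C2 mu0_def p_def c1_def by (simp add: mult.assoc)
  have "Bc * R / b \<le> Bc * R / (b * p)"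
    using p0 p1 b Bc R by (intro divide_left_mono) (auto intro: mult_nonneg_nonneg mult_pos_pos simp: mult_le_cancel_left1)
  moreover have "Bc * R / b = R + real m * g2 * R / b^2"
    unfolding Bc_def using b by (simp add: field_simps power2_eq_square)
  ultimately show ?thesis unfolding Qeq R_def[symmetric] g2_def[symmetric] by simp
qed


theorem corollary3p2:
  fixes m :: nat and a :: "nat \<Rightarrow> real" and w :: "nat \<Rightarrow> nat \<Rightarrow> real"
    and f :: "nat \<Rightarrow> real \<Rightarrow> real" and J \<gamma> \<eta> :: "nat \<Rightarrow> real"
    and k P b \<beta> \<epsilon> :: real
  assumes m2: "m \<ge> 2"
    and P_pos: "P > 0"
    and a_pos: "\<forall>i\<in>{1..m}. a i > 0"
    and b_pos: "b > 0"
    and beta_pos: "\<beta> > 0"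
    and eta_pos: "\<forall>i\<in>{1..m}. \<eta> i > 0"
    and k_pos: "k > 0"
    and a_gt_k: "\<forall>i\<in>{1..m}. a i > k"
    and f_bdd: "\<forall>i\<in>{1..m}. \<forall>s. \<bar>f i s\<bar> \<le> \<beta>"
    and f_lip: "\<forall>i\<in>{1..m}. loc_lipschitz (f i)"
    and eps_pos: "\<epsilon> > 0"
    and P_large: "P > Pstar m a w \<beta> J k \<eta> \<gamma> b \<epsilon>"
  shows "\<exists>D. 0 \<le> D \<and> D < \<epsilon> \<and>
     (\<forall>u \<rho>. is_solution m a w f k \<eta> J P \<gamma> b u \<rho> \<longrightarrow>
        (\<forall>i\<in>{1..m}. \<forall>j\<in>{1..m}. i < j \<longrightarrow>
           Limsup at_top (\<lambda>t. ereal \<bar>u t i - u t j\<bar>) \<le> ereal D)) \<and>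
     (\<forall>u \<rho>. is_solution m a w f k \<eta> J P \<gamma> b u \<rho> \<longrightarrow>
        (\<exists>T\<ge>0. \<forall>t>T. \<forall>i\<in>{1..m}. \<forall>j\<in>{1..m}. i \<noteq> j \<longrightarrow>
           \<bar>u t i - u t j\<bar>^2 \<le>
             exp (- (amin m a - k + P) * (t - T)) * \<bar>u T i - u T j\<bar>^2 + D^2))"
proof -
  have m1: "m \<ge> 1" using m2 by simp
  have mpos: "real m > 0" using m1 by simp
  have cardm: "card {1..m} = m" by simp
  define A where "A = amin m a - k"
  have A: "A > 0"
  proof -
    obtain i0 where "i0 \<in> {1..m}" "amin m a = a i0" using amin_in[OF m1] by blast
    then show ?thesis unfolding A_def using a_gt_k by auto
  qed
  define M where "M = real m * Wmax m w * \<beta> + Jmax m J"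
  define R where "R = real m * M^2 / A^2"
  define g2 where "g2 = gamma2 m \<gamma>"
  define Q where "Q = Qc m a w \<beta> J k \<gamma> b"
  have g2: "g2 \<ge> 0" unfolding g2_def using m1 by (rule gamma2_nonneg)
  have R0: "R \<ge> 0" unfolding R_def by simp
  have Qge: "Q \<ge> 1 + R + real m * g2 * R / b^2"
    using Q_ge[of m a k b w \<beta> J \<gamma>] A b_pos m1 unfolding Q_def R_def M_def A_def g2_def by simp
  have mg2R: "real m * g2 * R / b^2 \<ge> 0" using g2 R0 by simp
  have Q1: "Q \<ge> 1" using Qge R0 mg2R by linarith
  define G where "G = real m * Wstar m w * \<beta> + astar m a * sqrt Q + k * etastar m \<eta> * Q powr (3/2) + Jstar m J"
  define \<alpha> where "\<alpha> = A + real m * P"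
  have \<alpha>: "\<alpha> > 0" unfolding \<alpha>_def using A mult_pos_pos[OF mpos P_pos] by linarith
  have one: "1 \<in> {1..m}" using m1 by simp
  have G0: "G \<ge> 0"
  proof -
    have "0 \<le> Wstar m w" using Wstar_ge[OF one one one, of w] by simp
    moreover have "0 \<le> astar m a" using astar_ge[OF one one, of a] by simp
    moreover have "0 \<le> etastar m \<eta>" using etastar_ge[OF one one, of \<eta>] by simp
    moreover have "0 \<le> Jstar m J" using Jstar_ge[OF one one, of J] by simp
    ultimately show ?thesis unfolding G_def using beta_pos k_pos Q1 by simp
  qed
  have GPstar: "Pstar m a w \<beta> J k \<eta> \<gamma> b \<epsilon> = G / (real m * \<epsilon>)"
    unfolding Pstar_def G_def Q_def by simp
  have Glt: "G < \<epsilon> * \<alpha>"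
  proof -
    have "G / (real m * \<epsilon>) < P" using P_large GPstar by simp
    then have "G < P * (real m * \<epsilon>)" using mpos eps_pos by (simp add: pos_divide_less_eq)
    also have "\<dots> < \<epsilon> * \<alpha>" unfolding \<alpha>_def using A eps_pos by (simp add: algebra_simps)
    finally show ?thesis .
  qed
  define D where "D = (G / \<alpha> + \<epsilon>) / 2"
  have Ga: "G / \<alpha> < \<epsilon>" using Glt \<alpha> by (simp add: pos_divide_less_eq mult.commute)
  have Ga0: "G / \<alpha> \<ge> 0" using G0 \<alpha> by simp
  have halves: "x < e \<Longrightarrow> x < (x + e) / 2 \<and> (x + e) / 2 < e" for x e :: real
    by auto
  have D0: "D \<ge> 0" unfolding D_def using Ga0 eps_pos by simp
  have Dlt: "D < \<epsilon>" unfolding D_def using halves[OF Ga] by blast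
  have DG: "G / \<alpha> < D" unfolding D_def using halves[OF Ga] by blast
  have DG2: "(G / \<alpha>)^2 < D^2" using DG Ga0 by (simp add: power_strict_mono)
  have key: "eventually (\<lambda>t. \<forall>i\<in>{1..m}. \<forall>j\<in>{1..m}. (u t i - u t j)^2 \<le> D^2) at_top"
    if sol: "is_solution m a w f k \<eta> J P \<gamma> b u \<rho>" for u \<rho>
  proof -
    define du where "du t i = - a i * u t i + (\<Sum>j=1..m. w i j * f j (u t j))
             + k * (1 - \<eta> i * (\<rho> t)^2) * u t i + J i
             - P * (\<Sum>j=1..m. u t i - u t j)" for t i
    have ud: "((\<lambda>s. u s i) has_real_derivative du t i) (at t within {0..})"
      if "t \<ge> 0" "i \<in> {1..m}" for t i
      using sol that unfolding is_solution_def du_def by blast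
    have rd: "(\<rho> has_real_derivative ((\<Sum>i=1..m. \<gamma> i * u t i) - b * \<rho> t)) (at t within {0..})"
      if "t \<ge> 0" for t
      using sol that unfolding is_solution_def by blast
    have SWb: "\<bar>\<Sum>j=1..m. w i j * f j (u t j)\<bar> \<le> real m * Wmax m w * \<beta>" if i: "i \<in> {1..m}" for t i
    proof -
      have "\<bar>\<Sum>j=1..m. w i j * f j (u t j)\<bar> \<le> (\<Sum>j=1..m. \<bar>w i j * f j (u t j)\<bar>)" by (rule sum_abs)
      also have "\<dots> \<le> (\<Sum>j=1..m. Wmax m w * \<beta>)"
      proof (rule sum_mono)
        fix j assume j: "j \<in> {1..m}"
        have "\<bar>w i j\<bar> * \<bar>f j (u t j)\<bar> \<le> Wmax m w * \<beta>"
          using Wmax_ge[OF i j, of w] f_bdd j by (intro mult_mono) auto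
        then show "\<bar>w i j * f j (u t j)\<bar> \<le> Wmax m w * \<beta>" by (simp add: abs_mult)
      qed
      also have "\<dots> = real m * Wmax m w * \<beta>" by simp
      finally show ?thesis .
    qed
    define y where "y t = (\<Sum>i=1..m. (u t i)^2)" for t
    define y' where "y' t = (\<Sum>i=1..m. 2 * u t i * du t i)" for t
    have yd: "(y has_real_derivative y' t) (at t within {0..})" if t: "t \<ge> 0" for t
      unfolding y_def y'_def
    proof (rule DERIV_sum)
      fix i assume i: "i \<in> {1..m}"
      show "((\<lambda>x. (u x i)^2) has_real_derivative 2 * u t i * du t i) (at t within {0..})"
        by (rule DERIV_cong[OF DERIV_power[OF ud[OF t i], of 2]]) (simp add: algebra_simps)
    qed
    have yineq: "y' t \<le> - A * y t + real m * M^2 / A" for t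
    proof -
      have pt: "2 * u t i * du t i \<le> - A * (u t i)^2 + M^2 / A - 2 * P * (u t i * (\<Sum>j=1..m. u t i - u t j))"
        if i: "i \<in> {1..m}" for i
      proof -
        have "\<bar>(\<Sum>j=1..m. w i j * f j (u t j)) + J i\<bar> \<le> M"
          using SWb[OF i, of t] Jmax_ge[OF i, of J] unfolding M_def by linarith
        moreover have "0 \<le> k * \<eta> i * (\<rho> t)^2" using k_pos bspec[OF eta_pos i] by simp
        ultimately show ?thesis unfolding du_def
          by (intro norm_pt[OF A_def A amin_le[OF i]]) 
      qed
      have "y' t \<le> (\<Sum>i=1..m. - A * (u t i)^2 + M^2 / A - 2 * P * (u t i * (\<Sum>j=1..m. u t i - u t j)))"
        unfolding y'_def by (rule sum_mono) (rule pt)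
      also have "\<dots> = - A * y t + real m * M^2 / A - 2 * P * (\<Sum>i=1..m. u t i * (\<Sum>j=1..m. u t i - u t j))"
        unfolding y_def by (simp add: sum.distrib sum_subtractf sum_distrib_left sum_negf)
      also have "\<dots> \<le> - A * y t + real m * M^2 / A"
        using coupling_nonneg[of "{1..m}" "u t"] P_pos by simp
      finally show ?thesis .
    qed
    define \<delta> where "\<delta> = b^2 / (2 * (real m * g2 + b^2))"
    have \<delta>0: "\<delta> > 0"
    proof -
      have "real m * g2 + b^2 > 0" using b_pos g2 by (simp add: add_nonneg_pos)
      then show ?thesis unfolding \<delta>_def using b_pos by simp
    qed
    have \<delta>half: "real m * g2 * \<delta> / b^2 + \<delta> = 1 / 2"
    proof -
      define S where "S = real m * g2 + b^2"
      have S: "S > 0" unfolding S_def using b_pos g2 by (simp add: add_nonneg_pos)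
      have b2: "b^2 > 0" using b_pos by simp
      have "real m * g2 * \<delta> / b^2 = real m * g2 / (2 * S)"
        unfolding \<delta>_def S_def[symmetric] using b2 S by simp
      moreover have "\<delta> = b^2 / (2 * S)" unfolding \<delta>_def S_def ..
      ultimately have "real m * g2 * \<delta> / b^2 + \<delta> = (real m * g2 + b^2) / (2 * S)"
        by (simp add: add_divide_distrib)
      also have "\<dots> = 1 / 2" unfolding S_def[symmetric] using S by simp
      finally show ?thesis .
    qed
    have \<delta>le: "\<delta> \<le> 1 / 2"
    proof -
      have "real m * g2 * \<delta> / b^2 \<ge> 0" using g2 \<delta>0 by simp
      then show ?thesis using \<delta>half by linarith
    qed
    have yev: "eventually (\<lambda>t. y t \<le> R + \<delta>) at_top"
    proof -
      have "eventually (\<lambda>t. y t \<le> (real m * M^2 / A) / A + \<delta>) at_top"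
        by (rule ode_ev[OF yd always_eventually A \<delta>0]) (use yineq in blast)+
      moreover have "(real m * M^2 / A) / A = R" unfolding R_def by (simp add: power2_eq_square)
      ultimately show ?thesis by simp
    qed
    define z where "z t = (\<rho> t)^2" for t
    define z' where "z' t = 2 * \<rho> t * ((\<Sum>i=1..m. \<gamma> i * u t i) - b * \<rho> t)" for t
    have zd: "(z has_real_derivative z' t) (at t within {0..})" if t: "t \<ge> 0" for t
      unfolding z_def z'_def
      by (rule DERIV_cong[OF DERIV_power[OF rd[OF t], of 2]]) (simp add: algebra_simps)
    have zineq: "z' t \<le> - b * z t + real m * g2 * y t / b" for t
    proof -
      have bm: "b / real m > 0" using b_pos mpos by simp
      have "2 * \<rho> t * (\<Sum>i=1..m. \<gamma> i * u t i) = (\<Sum>i=1..m. 2 * \<rho> t * (\<gamma> i * u t i))"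
        by (simp add: sum_distrib_left)
      also have "\<dots> \<le> (\<Sum>i=1..m. b / real m * (\<rho> t)^2 + real m / b * (g2 * (u t i)^2))"
      proof (rule sum_mono)
        fix i assume i: "i \<in> {1..m}"
        have "2 * \<rho> t * (\<gamma> i * u t i) \<le> b / real m * (\<rho> t)^2 + (\<gamma> i * u t i)^2 / (b / real m)"
          by (rule young[OF bm])
        also have "(\<gamma> i * u t i)^2 / (b / real m) = real m / b * ((\<gamma> i)^2 * (u t i)^2)"
          by (simp add: power_mult_distrib)
        also have "\<dots> \<le> real m / b * (g2 * (u t i)^2)"
          using gamma2_ge[OF i, of \<gamma>] b_pos unfolding g2_def
          by (intro mult_left_mono mult_right_mono) auto
        finally show "2 * \<rho> t * (\<gamma> i * u t i) \<le> b / real m * (\<rho> t)^2 + real m / b * (g2 * (u t i)^2)"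
          by simp
      qed
      also have "\<dots> = real m * (b / real m * (\<rho> t)^2) + real m / b * g2 * y t"
      proof -
        have e1: "(\<Sum>i=1..m. real m / b * (g2 * (u t i)^2)) = real m / b * g2 * y t"
          unfolding y_def by (simp only: sum_distrib_left[symmetric] mult.assoc)
        show ?thesis unfolding sum.distrib e1 by simp
      qed
      also have "\<dots> = b * (\<rho> t)^2 + real m * g2 * y t / b"
        using mpos b_pos by simp
      finally have "2 * \<rho> t * (\<Sum>i=1..m. \<gamma> i * u t i) \<le> b * (\<rho> t)^2 + real m * g2 * y t / b" .
      then show ?thesis unfolding z'_def z_def by (simp add: algebra_simps power2_eq_square)
    qed
    have zev: "eventually (\<lambda>t. z t \<le> (real m * g2 * (R + \<delta>) / b) / b + \<delta>) at_top"
    proof (rule ode_ev[OF zd _ b_pos \<delta>0])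
      show "eventually (\<lambda>t. z' t \<le> - b * z t + real m * g2 * (R + \<delta>) / b) at_top"
        using yev
      proof eventually_elim
        case (elim t)
        have "real m * g2 * y t / b \<le> real m * g2 * (R + \<delta>) / b"
          using elim g2 b_pos by (intro divide_right_mono mult_left_mono) auto
        then show ?case using zineq[of t] by linarith
      qed
    qed auto
    have zQ: "(real m * g2 * (R + \<delta>) / b) / b + \<delta> \<le> Q"
    proof -
      have "(real m * g2 * (R + \<delta>) / b) / b + \<delta> = real m * g2 * R / b^2 + (real m * g2 * \<delta> / b^2 + \<delta>)"
        using b_pos by (simp add: field_simps power2_eq_square)
      then show ?thesis using \<delta>half Qge R0 by linarith
    qed
    have bnds: "eventually (\<lambda>t. (\<forall>l\<in>{1..m}. (u t l)^2 \<le> Q) \<and> (\<rho> t)^2 \<le> Q) at_top"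
      using yev zev
    proof eventually_elim
      case (elim t)
      have "\<forall>l\<in>{1..m}. (u t l)^2 \<le> Q"
      proof
        fix l assume l: "l \<in> {1..m}"
        have "(u t l)^2 \<le> y t" unfolding y_def
          by (rule member_le_sum[of l "{1..m}" "\<lambda>i. (u t i)^2"]) (use l in auto)
        then show "(u t l)^2 \<le> Q" using elim \<delta>le Qge mg2R by linarith
      qed
      moreover have "(\<rho> t)^2 \<le> Q" using elim zQ unfolding z_def by linarith
      ultimately show ?case by blast
    qed
    have sqQ: "Q powr (3/2) = Q * sqrt Q"
    proof -
      have "Q powr (3/2) = Q powr (1 + 1/2)" by simp
      also have "\<dots> = Q powr 1 * Q powr (1/2)" by (rule powr_add)
      also have "\<dots> = Q * sqrt Q" using Q1 by (simp add: powr_half_sqrt)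
      finally show ?thesis .
    qed
    have pair: "eventually (\<lambda>t. (u t i - u t j)^2 \<le> D^2) at_top"
      if i: "i \<in> {1..m}" and j: "j \<in> {1..m}" for i j
    proof -
      define E where "E t = (u t i - u t j)^2" for t
      define E' where "E' t = 2 * (u t i - u t j) * (du t i - du t j)" for t
      have Ed: "(E has_real_derivative E' t) (at t within {0..})" if t: "t \<ge> 0" for t
        unfolding E_def E'_def
        by (rule DERIV_cong[OF DERIV_power[OF DERIV_diff[OF ud[OF t i] ud[OF t j]], of 2]])
           (simp add: algebra_simps)
      have Eineq: "eventually (\<lambda>t. E' t \<le> - \<alpha> * E t + G^2 / \<alpha>) at_top"
        using bnds
      proof eventually_elim
        case (elim t)
        define r where "r = - (a i - a j) * u t j + (\<Sum>l=1..m. (w i l - w j l) * f l (u t l))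
            - k * (\<eta> i - \<eta> j) * (\<rho> t)^2 * u t j + (J i - J j)"
        define c where "c = a i - k + k * \<eta> i * (\<rho> t)^2 + real m * P"
        have s1: "(\<Sum>l=1..m. w i l * f l (u t l)) - (\<Sum>l=1..m. w j l * f l (u t l))
                 = (\<Sum>l=1..m. (w i l - w j l) * f l (u t l))"
          by (simp add: sum_subtractf[symmetric] left_diff_distrib)
        have s2: "(\<Sum>l=1..m. x - u t l) = real m * x - (\<Sum>l=1..m. u t l)" for x
          by (simp add: sum_subtractf)
        have deq: "du t i - du t j = - c * (u t i - u t j) + r"
          unfolding du_def c_def r_def by (rule diff_alg[OF s1 s2 s2])
        have uj: "\<bar>u t j\<bar> \<le> sqrt Q"
          using elim j real_sqrt_le_mono[of "(u t j)^2" Q] by auto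
        have rho2: "(\<rho> t)^2 \<le> Q" using elim by blast
        have r1: "\<bar>(a i - a j) * u t j\<bar> \<le> astar m a * sqrt Q"
          unfolding abs_mult using astar_ge[OF i j, of a] uj by (intro mult_mono) auto
        have r2: "\<bar>\<Sum>l=1..m. (w i l - w j l) * f l (u t l)\<bar> \<le> real m * Wstar m w * \<beta>"
        proof -
          have "\<bar>\<Sum>l=1..m. (w i l - w j l) * f l (u t l)\<bar> \<le> (\<Sum>l=1..m. \<bar>(w i l - w j l) * f l (u t l)\<bar>)"
            by (rule sum_abs)
          also have "\<dots> \<le> (\<Sum>l=1..m. Wstar m w * \<beta>)"
          proof (rule sum_mono)
            fix l assume l: "l \<in> {1..m}"
            have "\<bar>w i l - w j l\<bar> * \<bar>f l (u t l)\<bar> \<le> Wstar m w * \<beta>"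
              using Wstar_ge[OF i j l, of w] f_bdd l by (intro mult_mono) auto
            then show "\<bar>(w i l - w j l) * f l (u t l)\<bar> \<le> Wstar m w * \<beta>" by (simp add: abs_mult)
          qed
          also have "\<dots> = real m * Wstar m w * \<beta>" by simp
          finally show ?thesis .
        qed
        have r3: "\<bar>k * (\<eta> i - \<eta> j) * (\<rho> t)^2 * u t j\<bar> \<le> k * etastar m \<eta> * Q powr (3/2)"
        proof -
          have "\<bar>k * (\<eta> i - \<eta> j) * (\<rho> t)^2 * u t j\<bar> = k * \<bar>\<eta> i - \<eta> j\<bar> * ((\<rho> t)^2 * \<bar>u t j\<bar>)"
            using k_pos by (simp add: abs_mult)
          also have "\<dots> \<le> k * etastar m \<eta> * (Q * sqrt Q)"
            using etastar_ge[OF i j, of \<eta>] rho2 uj k_pos Q1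
            by (intro mult_mono mult_left_mono) auto
          finally show ?thesis unfolding sqQ .
        qed
        have r4: "\<bar>J i - J j\<bar> \<le> Jstar m J" using Jstar_ge[OF i j, of J] .
        have rG: "\<bar>r\<bar> \<le> G" unfolding r_def G_def using r1 r2 r3 r4 by linarith
        have cge: "c \<ge> \<alpha>"
        proof -
          have "0 \<le> k * \<eta> i * (\<rho> t)^2" using k_pos bspec[OF eta_pos i] by simp
          then show ?thesis unfolding c_def \<alpha>_def A_def using amin_le[OF i, of a] by linarith
        qed
        have "E' t = 2 * (u t i - u t j) * (- c * (u t i - u t j) + r)" unfolding E'_def deq ..
        also have "\<dots> \<le> - \<alpha> * (u t i - u t j)^2 + G^2 / \<alpha>"
          by (rule diff_ineq[OF cge \<alpha> rG])
        finally show ?case unfolding E_def .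
      qed
      have "eventually (\<lambda>t. E t \<le> (G^2 / \<alpha>) / \<alpha> + (D^2 - (G / \<alpha>)^2)) at_top"
        by (rule ode_ev[OF Ed Eineq \<alpha>]) (use DG2 in auto)
      moreover have "(G^2 / \<alpha>) / \<alpha> = (G / \<alpha>)^2" by (simp add: power2_eq_square)
      ultimately show ?thesis unfolding E_def by simp
    qed
    show ?thesis
      by (intro eventually_ball_finite ballI) (auto intro: pair)
  qed
  show ?thesis
  proof (rule exI[of _ D], intro conjI)
    show "0 \<le> D" by (rule D0)
    show "D < \<epsilon>" by (rule Dlt)
  next
    show "\<forall>u \<rho>. is_solution m a w f k \<eta> J P \<gamma> b u \<rho> \<longrightarrow>
        (\<forall>i\<in>{1..m}. \<forall>j\<in>{1..m}. i < j \<longrightarrow>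
           Limsup at_top (\<lambda>t. ereal \<bar>u t i - u t j\<bar>) \<le> ereal D)"
  proof (intro allI impI ballI)
    fix u \<rho> i j
    assume sol: "is_solution m a w f k \<eta> J P \<gamma> b u \<rho>" and i: "i \<in> {1..m}" and j: "j \<in> {1..m}" and "i < j"
    have "eventually (\<lambda>t. ereal \<bar>u t i - u t j\<bar> \<le> ereal D) at_top"
      using key[OF sol]
    proof eventually_elim
      case (elim t)
      then have "(u t i - u t j)^2 \<le> D^2" using i j by blast
      then have "\<bar>u t i - u t j\<bar> \<le> \<bar>D\<bar>" by (simp add: abs_le_square_iff)
      then show ?case using D0 by simp
    qed
    then show "Limsup at_top (\<lambda>t. ereal \<bar>u t i - u t j\<bar>) \<le> ereal D"
      by (rule Limsup_bounded)
  qed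
  next
    show "\<forall>u \<rho>. is_solution m a w f k \<eta> J P \<gamma> b u \<rho> \<longrightarrow>
        (\<exists>T\<ge>0. \<forall>t>T. \<forall>i\<in>{1..m}. \<forall>j\<in>{1..m}. i \<noteq> j \<longrightarrow>
           \<bar>u t i - u t j\<bar>^2 \<le>
             exp (- (amin m a - k + P) * (t - T)) * \<bar>u T i - u T j\<bar>^2 + D^2)"
  proof (intro allI impI)
    fix u \<rho>
    assume sol: "is_solution m a w f k \<eta> J P \<gamma> b u \<rho>"
    obtain T0 where T0: "\<And>t. t \<ge> T0 \<Longrightarrow> \<forall>i\<in>{1..m}. \<forall>j\<in>{1..m}. (u t i - u t j)^2 \<le> D^2"
      using key[OF sol] unfolding eventually_at_top_linorder by blast
    define T where "T = max T0 0"
    show "\<exists>T\<ge>0. \<forall>t>T. \<forall>i\<in>{1..m}. \<forall>j\<in>{1..m}. i \<noteq> j \<longrightarrow>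
           \<bar>u t i - u t j\<bar>^2 \<le>
             exp (- (amin m a - k + P) * (t - T)) * \<bar>u T i - u T j\<bar>^2 + D^2"
    proof -
      have T_nn: "T \<ge> 0" unfolding T_def by simp
      have "\<forall>t>T. \<forall>i\<in>{1..m}. \<forall>j\<in>{1..m}. i \<noteq> j \<longrightarrow>
           \<bar>u t i - u t j\<bar>^2 \<le>
             exp (- (amin m a - k + P) * (t - T)) * \<bar>u T i - u T j\<bar>^2 + D^2"
      proof (intro allI impI ballI)
        fix t i j assume tT: "t > T" and i: "i \<in> {1..m}" and j: "j \<in> {1..m}"
        have "(u t i - u t j)^2 \<le> D^2" using T0[of t] tT i j unfolding T_def by auto
        moreover have "0 \<le> exp (- (amin m a - k + P) * (t - T)) * (u T i - u T j)^2" by simp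
        ultimately show "\<bar>u t i - u t j\<bar>^2 \<le> exp (- (amin m a - k + P) * (t - T)) * \<bar>u T i - u T j\<bar>^2 + D^2"
          unfolding power2_abs by linarith
      qed
      then show ?thesis using T_nn by blast
    qed
  qed
  qed
qed

end
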